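(* Let $(\alpha,\beta)\in\mathcal{A}(K,L,T)$. Then operations (1) and (2) (defined in the context) are not both applicable to $(\alpha,\beta)$. Moreover, applying operation (1) twice in succession, first with index $i$ and then with index $i'$, yields the same degree table as applying it first with index $i'$ and then with index $i$; the same holds for operation (2).
   Context: A degree table with parameters $K,L,T$ is a tuple $(\alpha_{\mathrm p},\alpha_{\mathrm s},\beta_{\mathrm p},\beta_{\mathrm s})$ of nonnegative integer vectors of lengths $K,T,L,T$ such that, with $\alpha=(\alpha_{\mathrm p}\mid\alpha_{\mathrm s})$, $\beta=(\beta_{\mathrm p}\mid\beta_{\mathrm s})$: entries of $\alpha$ are distinct; entries of $\beta$ are distinct; every $n\in\operatorname{Set}(\alpha_{\mathrm p})+\operatorname{Set}(\beta_{\mathrm p})$ has a unique representation $n=i+j$ with $i\in\operatorname{Set}(\alpha)$, $j\in\operatorname{Set}(\beta)$; $\mathcal{A}(K,L,T)$ is the set of these. For such a table let $p$, $q$ be the entries of $\alpha$, $\beta$ sorted increasingly, $a=\min\operatorname{Set}(\alpha)$, $A=\max\operatorname{Set}(\alpha)$, $b=\min\operatorname{Set}(\beta)$, $B=\max\operatorname{Set}(\beta)$. Operation (1) with index $i$ ($1\le i<K+T$) is applicable if $p_i+B<(p_{i+1}-1)+b$ and replaces $\alpha$ by $\alpha'$ with $\alpha'_j=\alpha_j$ if $\alpha_j\le p_i$ and $\alpha'_j=\alpha_j-1$ otherwise. Operation (2) with index $i$ ($1\le i<L+T$) is applicable if $q_i+A<(q_{i+1}-1)+a$ and replaces $\beta$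 by $\beta'$ with $\beta'_j=\beta_j$ if $\beta_j\le q_i$ and $\beta'_j=\beta_j-1$ otherwise. An operation is applicable to a table if it is applicable with some index; indices refer to the sorted order of the current table. *)

theory Defs
  imports Main
begin

type_synonym table = "nat list \<times> nat list \<times> nat list \<times> nat list"

fun alpha :: "table \<Rightarrow> nat list" where
  "alpha (ap, as, bp, bs) = ap @ as"

fun beta :: "table \<Rightarrow> nat list" where
  "beta (ap, as, bp, bs) = bp @ bs"

fun degree_table :: "nat \<Rightarrow> nat \<Rightarrow> nat \<Rightarrow> table \<Rightarrow> bool" where
  "degree_table K L T (ap, as, bp, bs) \<longleftrightarrow>
     length ap = K \<and> length as = T \<and> length bp = L \<and> length bs = T \<and>
     distinct (ap @ as) \<and> distinct (bp @ bs) \<and>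
     (\<forall>n \<in> {i + j | i j. i \<in> set ap \<and> j \<in> set bp}.
        \<exists>!ij. fst ij \<in> set (ap @ as) \<and> snd ij \<in> set (bp @ bs) \<and> n = fst ij + snd ij)"

definition tables_A :: "nat \<Rightarrow> nat \<Rightarrow> nat \<Rightarrow> table set" ("\<A>") where
  "\<A> K L T = {t. degree_table K L T t}"

(* sorted entries; indices are 1-based as in the paper: p_i = p ! (i - 1) *)
definition pp :: "table \<Rightarrow> nat \<Rightarrow> nat" where
  "pp t i = sort (alpha t) ! (i - 1)"

definition qq :: "table \<Rightarrow> nat \<Rightarrow> nat" where
  "qq t i = sort (beta t) ! (i - 1)"

definition amin :: "table \<Rightarrow> nat" where "amin t = Min (set (alpha t))"
definition amax :: "table \<Rightarrow> nat" where "amax t = Max (set (alpha t))"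
definition bmin :: "table \<Rightarrow> nat" where "bmin t = Min (set (beta t))"
definition bmax :: "table \<Rightarrow> nat" where "bmax t = Max (set (beta t))"

definition op1_applicable :: "table \<Rightarrow> nat \<Rightarrow> bool" where
  "op1_applicable t i \<longleftrightarrow> 1 \<le> i \<and> i < length (alpha t) \<and>
     pp t i + bmax t < (pp t (i + 1) - 1) + bmin t"

definition op2_applicable :: "table \<Rightarrow> nat \<Rightarrow> bool" where
  "op2_applicable t i \<longleftrightarrow> 1 \<le> i \<and> i < length (beta t) \<and>
     qq t i + amax t < (qq t (i + 1) - 1) + amin t"

definition shift_down :: "nat \<Rightarrow> nat \<Rightarrow> nat" where
  "shift_down c x = (if x \<le> c then x else x - 1)"

fun op1 :: "nat \<Rightarrow> table \<Rightarrow> table" where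
  "op1 i (ap, as, bp, bs) =
     (let c = pp (ap, as, bp, bs) i in (map (shift_down c) ap, map (shift_down c) as, bp, bs))"

fun op2 :: "nat \<Rightarrow> table \<Rightarrow> table" where
  "op2 i (ap, as, bp, bs) =
     (let c = qq (ap, as, bp, bs) i in (ap, as, map (shift_down c) bp, map (shift_down c) bs))"

definition applicable1 :: "table \<Rightarrow> bool" where
  "applicable1 t \<longleftrightarrow> (\<exists>i. op1_applicable t i)"

definition applicable2 :: "table \<Rightarrow> bool" where
  "applicable2 t \<longleftrightarrow> (\<exists>i. op2_applicable t i)"

end

theory Submission
  imports Defs "HOL-Library.Multiset"
begin

lemma mono_shift_down: "mono (shift_down c)"
  by (auto simp: mono_def shift_down_def)

lemma sort_map_mono:
  assumes "mono f" shows "sort (map f xs) = map f (sort (xs::nat list))"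
proof -
  have "sort (map f xs) = map f (sort xs)"
  proof (rule properties_for_sort)
    show "mset (map f (sort xs)) = mset (map f xs)" by simp
    show "sorted (map f (sort xs))" using assms
      by (auto simp: sorted_map monoD intro: sorted_wrt_mono_rel[OF _ sorted_sort])
  qed
  then show ?thesis .
qed

lemma key:
  assumes "sorted (xs::nat list)" "1 \<le> i" "i < length xs" "xs!(i-1) < xs!i" "k < length xs"
  shows "shift_down (xs!(i-1)) (xs!k) = (if k < i then xs!k else xs!k - 1)"
proof (cases "k < i")
  case True
  then have "xs!k \<le> xs!(i-1)" using assms by (intro sorted_nth_mono) auto
  then show ?thesis using True by (simp add: shift_down_def)
next
  case False
  then have "xs!i \<le> xs!k" using assms by (intro sorted_nth_mono) auto
  then show ?thesis using False assms(4) by (simp add: shift_down_def)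
qed

lemma comm_sd:
  assumes "(c1::nat) < c2"
  shows "shift_down (c2 - 1) (shift_down c1 x) = shift_down c1 (shift_down c2 x)"
  using assms by (auto simp: shift_down_def)

lemma alpha_op1: "alpha (op1 i t) = map (shift_down (pp t i)) (alpha t)"
  by (cases t) (simp add: Let_def)
lemma beta_op1: "beta (op1 i t) = beta t"
  by (cases t) (simp add: Let_def)
lemma beta_op2: "beta (op2 i t) = map (shift_down (qq t i)) (beta t)"
  by (cases t) (simp add: Let_def)
lemma alpha_op2: "alpha (op2 i t) = alpha t"
  by (cases t) (simp add: Let_def)

lemma pp_op1: "sort (alpha (op1 i t)) = map (shift_down (pp t i)) (sort (alpha t))"
  by (simp add: alpha_op1 sort_map_mono mono_shift_down)
lemma qq_op2: "sort (beta (op2 i t)) = map (shift_down (qq t i)) (sort (beta t))"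
  by (simp add: beta_op2 sort_map_mono mono_shift_down)

lemma generic:
  fixes xs :: "nat list" and B b :: nat
  assumes st: "sorted_wrt (<) xs"
    and H1: "1 \<le> i" "i < length xs" "xs!(i-1) + B < xs!i - 1 + b"
    and H2: "1 \<le> i'" "i' < length xs"
      "(map (shift_down (xs!(i-1))) xs)!(i'-1) + B < (map (shift_down (xs!(i-1))) xs)!i' - 1 + b"
  shows "xs!(i'-1) + B < xs!i' - 1 + b"
    and "(map (shift_down (xs!(i'-1))) xs)!(i-1) + B < (map (shift_down (xs!(i'-1))) xs)!i - 1 + b"
    and "shift_down ((map (shift_down (xs!(i-1))) xs)!(i'-1)) \<circ> shift_down (xs!(i-1))
       = shift_down ((map (shift_down (xs!(i'-1))) xs)!(i-1)) \<circ> shift_down (xs!(i'-1))"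
proof -
  have so: "sorted xs" using st by (simp add: strict_sorted_iff)
  have lt: "\<And>j k. j < k \<Longrightarrow> k < length xs \<Longrightarrow> xs!j < xs!k"
    using st by (simp add: sorted_wrt_iff_nth_less)
  have g1: "xs!(i-1) < xs!i" using lt H1 by simp
  have g2: "xs!(i'-1) < xs!i'" using lt H2 by simp
  have Y: "\<And>k. k < length xs \<Longrightarrow> (map (shift_down (xs!(i-1))) xs)!k = (if k < i then xs!k else xs!k - 1)"
    using key[OF so H1(1,2) g1] by simp
  have Z: "\<And>k. k < length xs \<Longrightarrow> (map (shift_down (xs!(i'-1))) xs)!k = (if k < i' then xs!k else xs!k - 1)"
    using key[OF so H2(1,2) g2] by simp
  have Y1: "(map (shift_down (xs!(i-1))) xs)!(i'-1) = (if i'-1 < i then xs!(i'-1) else xs!(i'-1) - 1)"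
    using Y[of "i'-1"] H2 by simp
  have Y2: "(map (shift_down (xs!(i-1))) xs)!i' = (if i' < i then xs!i' else xs!i' - 1)"
    using Y[of "i'"] H2 by simp
  have Z1: "(map (shift_down (xs!(i'-1))) xs)!(i-1) = (if i-1 < i' then xs!(i-1) else xs!(i-1) - 1)"
    using Z[of "i-1"] H1 by simp
  have Z2: "(map (shift_down (xs!(i'-1))) xs)!i = (if i < i' then xs!i else xs!i - 1)"
    using Z[of "i"] H1 by simp
  have P1: "i \<le> i'-1 \<Longrightarrow> 0 < xs!(i'-1)"
  proof -
    assume "i \<le> i'-1"
    then have "xs!i \<le> xs!(i'-1)" using so H2 by (intro sorted_nth_mono) auto
    then show ?thesis using g1 by simp
  qed
  have P2: "i' \<le> i-1 \<Longrightarrow> 0 < xs!(i-1)"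
  proof -
    assume "i' \<le> i-1"
    then have "xs!i' \<le> xs!(i-1)" using so H1 by (intro sorted_nth_mono) auto
    then show ?thesis using g2 by simp
  qed
  show "xs!(i'-1) + B < xs!i' - 1 + b"
  proof (cases i i' rule: linorder_cases)
    case less
    then have "0 < xs!(i'-1)" using P1 by simp
    moreover have "(map (shift_down (xs!(i-1))) xs)!(i'-1) = xs!(i'-1) - 1"
      "(map (shift_down (xs!(i-1))) xs)!i' = xs!i' - 1" using Y1 Y2 less by (auto simp del: nth_map)
    ultimately show ?thesis using H2(3) g2 by linarith
  next
    case equal
    moreover have "(map (shift_down (xs!(i-1))) xs)!(i'-1) = xs!(i'-1)"
      "(map (shift_down (xs!(i-1))) xs)!i' = xs!i' - 1" using Y1 Y2 equal H1 by (auto simp del: nth_map)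
    ultimately show ?thesis using H2(3) g2 by linarith
  next
    case greater
    moreover have "(map (shift_down (xs!(i-1))) xs)!(i'-1) = xs!(i'-1)"
      "(map (shift_down (xs!(i-1))) xs)!i' = xs!i'" using Y1 Y2 greater H2 by (auto simp del: nth_map)
    ultimately show ?thesis using H2(3) by linarith
  qed
  show "(map (shift_down (xs!(i'-1))) xs)!(i-1) + B < (map (shift_down (xs!(i'-1))) xs)!i - 1 + b"
  proof (cases i i' rule: linorder_cases)
    case less
    moreover have "(map (shift_down (xs!(i'-1))) xs)!(i-1) = xs!(i-1)"
      "(map (shift_down (xs!(i'-1))) xs)!i = xs!i" using Z1 Z2 less H1 by (auto simp del: nth_map)
    ultimately show ?thesis using H1(3) by linarith
  next
    case equal
    then show ?thesis using H2(3) by simp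
  next
    case greater
    then have "0 < xs!(i-1)" using P2 by simp
    moreover have "(map (shift_down (xs!(i'-1))) xs)!(i-1) = xs!(i-1) - 1"
      "(map (shift_down (xs!(i'-1))) xs)!i = xs!i - 1" using Z1 Z2 greater by (auto simp del: nth_map)
    ultimately show ?thesis using H1(3) g1 by linarith
  qed
  show "shift_down ((map (shift_down (xs!(i-1))) xs)!(i'-1)) \<circ> shift_down (xs!(i-1))
       = shift_down ((map (shift_down (xs!(i'-1))) xs)!(i-1)) \<circ> shift_down (xs!(i'-1))"
  proof (cases i i' rule: linorder_cases)
    case less
    have "xs!i \<le> xs!(i'-1)" using so less H2 by (intro sorted_nth_mono) auto
    then have "xs!(i-1) < xs!(i'-1)" using g1 by simp
    then have c: "xs!(i-1) < xs!(i'-1)" .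
    have e1: "(map (shift_down (xs!(i-1))) xs)!(i'-1) = xs!(i'-1) - 1"
      "(map (shift_down (xs!(i'-1))) xs)!(i-1) = xs!(i-1)"
      proof -
        have c1: "(i'-1 < i) = False" "(i-1 < i') = True" using less by auto
        show "(map (shift_down (xs!(i-1))) xs)!(i'-1) = xs!(i'-1) - 1" using Y1 unfolding c1 if_False .
        show "(map (shift_down (xs!(i'-1))) xs)!(i-1) = xs!(i-1)" using Z1 unfolding c1 if_True .
      qed
    show ?thesis unfolding e1 by (rule ext, simp only: comp_apply comm_sd[OF c])
  next
    case equal then show ?thesis by simp
  next
    case greater
    have "xs!i' \<le> xs!(i-1)" using so greater H1 by (intro sorted_nth_mono) auto
    then have "xs!(i'-1) < xs!(i-1)" using g2 by simp
    then have c: "xs!(i'-1) < xs!(i-1)" .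
    have e1: "(map (shift_down (xs!(i-1))) xs)!(i'-1) = xs!(i'-1)"
      "(map (shift_down (xs!(i'-1))) xs)!(i-1) = xs!(i-1) - 1"
      proof -
        have c1: "(i'-1 < i) = True" "(i-1 < i') = False" using greater H2 by auto
        show "(map (shift_down (xs!(i-1))) xs)!(i'-1) = xs!(i'-1)" using Y1 unfolding c1 if_True .
        show "(map (shift_down (xs!(i'-1))) xs)!(i-1) = xs!(i-1) - 1" using Z1 unfolding c1 if_False .
      qed
    show ?thesis unfolding e1 by (rule ext, simp only: comp_apply comm_sd[OF c])
  qed
qed

lemma op1_app_iff: "op1_applicable t i \<longleftrightarrow> 1 \<le> i \<and> i < length (sort (alpha t)) \<and>
   sort (alpha t)!(i-1) + bmax t < sort (alpha t)!i - 1 + bmin t"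
  by (simp add: op1_applicable_def pp_def)
lemma op2_app_iff: "op2_applicable t i \<longleftrightarrow> 1 \<le> i \<and> i < length (sort (beta t)) \<and>
   sort (beta t)!(i-1) + amax t < sort (beta t)!i - 1 + amin t"
  by (simp add: op2_applicable_def qq_def)

lemma op1_op1: "op1 j (op1 i t) = (let f = shift_down (pp (op1 i t) j) \<circ> shift_down (pp t i) in
   (map f (fst t), map f (fst (snd t)), fst (snd (snd t)), snd (snd (snd t))))"
proof -
  obtain ap as bp bs where t: "t = (ap, as, bp, bs)" by (cases t) auto
  show ?thesis unfolding t by (simp only: op1.simps Let_def map_map fst_conv snd_conv)
qed
lemma op2_op2: "op2 j (op2 i t) = (let f = shift_down (qq (op2 i t) j) \<circ> shift_down (qq t i) in
   (fst t, fst (snd t), map f (fst (snd (snd t))), map f (snd (snd (snd t)))))"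
proof -
  obtain ap as bp bs where t: "t = (ap, as, bp, bs)" by (cases t) auto
  show ?thesis unfolding t by (simp only: op2.simps Let_def map_map fst_conv snd_conv)
qed

lemma not_both:
  assumes "op1_applicable t i" "op2_applicable t j" shows False
proof -
  let ?xs = "sort (alpha t)" let ?ys = "sort (beta t)"
  have h1: "1 \<le> i" "i < length ?xs" "?xs!(i-1) + bmax t < ?xs!i - 1 + bmin t"
    using assms(1) op1_app_iff by auto
  have h2: "1 \<le> j" "j < length ?ys" "?ys!(j-1) + amax t < ?ys!j - 1 + amin t"
    using assms(2) op2_app_iff by auto
  have m1: "?xs!(i-1) \<in> set (alpha t)" "?xs!i \<in> set (alpha t)"
    using h1 by (metis less_imp_diff_less nth_mem set_sort)+
  have m2: "?ys!(j-1) \<in> set (beta t)" "?ys!j \<in> set (beta t)"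
    using h2 by (metis less_imp_diff_less nth_mem set_sort)+
  have "amin t \<le> ?xs!(i-1)" "?xs!i \<le> amax t"
    using m1 by (simp_all add: amin_def amax_def)
  moreover have "bmin t \<le> ?ys!(j-1)" "?ys!j \<le> bmax t"
    using m2 by (simp_all add: bmin_def bmax_def)
  moreover have "?ys!(j-1) \<le> bmax t" "amin t \<le> ?xs!i"
    using m1 m2 by (simp_all add: amin_def bmax_def)
  ultimately show False using h1(3) h2(3) by linarith
qed

theorem lemma5:
  fixes K L T :: nat and t :: table
  assumes "t \<in> \<A> K L T"
  shows "\<not> (applicable1 t \<and> applicable2 t) \<and>
    (\<forall>i i'. op1_applicable t i \<and> op1_applicable (op1 i t) i' \<longrightarrow>
            op1_applicable t i' \<and> op1_applicable (op1 i' t) i \<and>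
            op1 i' (op1 i t) = op1 i (op1 i' t)) \<and>
    (\<forall>i i'. op2_applicable t i \<and> op2_applicable (op2 i t) i' \<longrightarrow>
            op2_applicable t i' \<and> op2_applicable (op2 i' t) i \<and>
            op2 i' (op2 i t) = op2 i (op2 i' t))"
proof (intro conjI allI impI)
  show "\<not> (applicable1 t \<and> applicable2 t)"
    using not_both unfolding applicable1_def applicable2_def by blast
  have dist: "distinct (alpha t)" "distinct (beta t)"
    using assms by (cases t, simp add: tables_A_def)+
  have sa: "sorted_wrt (<) (sort (alpha t))" "sorted_wrt (<) (sort (beta t))"
    using dist by (simp_all add: strict_sorted_iff)
  fix i i'
  {
    assume a: "op1_applicable t i \<and> op1_applicable (op1 i t) i'"
    let ?xs = "sort (alpha t)"
    have bb: "\<And>k. bmax (op1 k t) = bmax t" "\<And>k. bmin (op1 k t) = bmin t"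
      by (simp_all add: bmax_def bmin_def beta_op1)
    have H1: "1 \<le> i" "i < length ?xs" "?xs!(i-1) + bmax t < ?xs!i - 1 + bmin t"
      using a op1_app_iff by auto
    have H2: "1 \<le> i'" "i' < length ?xs"
      "(map (shift_down (?xs!(i-1))) ?xs)!(i'-1) + bmax t < (map (shift_down (?xs!(i-1))) ?xs)!i' - 1 + bmin t"
      using a unfolding op1_app_iff pp_op1 bb by (auto simp: pp_def simp del: nth_map)
    note G = generic[OF sa(1) H1 H2]
    show "op1_applicable t i'" unfolding op1_app_iff using G(1) H2 by simp
    show "op1_applicable (op1 i' t) i" unfolding op1_app_iff pp_op1 bb
      using G(2) H1 by (simp add: pp_def del: nth_map)
    show "op1 i' (op1 i t) = op1 i (op1 i' t)"
      unfolding op1_op1 using G(3) by (simp add: pp_def pp_op1 del: nth_map)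
  }
  {
    assume a: "op2_applicable t i \<and> op2_applicable (op2 i t) i'"
    let ?xs = "sort (beta t)"
    have bb: "\<And>k. amax (op2 k t) = amax t" "\<And>k. amin (op2 k t) = amin t"
      by (simp_all add: amax_def amin_def alpha_op2)
    have H1: "1 \<le> i" "i < length ?xs" "?xs!(i-1) + amax t < ?xs!i - 1 + amin t"
      using a op2_app_iff by auto
    have H2: "1 \<le> i'" "i' < length ?xs"
      "(map (shift_down (?xs!(i-1))) ?xs)!(i'-1) + amax t < (map (shift_down (?xs!(i-1))) ?xs)!i' - 1 + amin t"
      using a unfolding op2_app_iff qq_op2 bb by (auto simp: qq_def simp del: nth_map)
    note G = generic[OF sa(2) H1 H2]
    show "op2_applicable t i'" unfolding op2_app_iff using G(1) H2 by simp
    show "op2_applicable (op2 i' t) i" unfolding op2_app_iff qq_op2 bb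
      using G(2) H1 by (simp add: qq_def del: nth_map)
    show "op2 i' (op2 i t) = op2 i (op2 i' t)"
      unfolding op2_op2 using G(3) by (simp add: qq_def qq_op2 del: nth_map)
  }
qed

end
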